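(* Let $\mu$ be a translation invariant probability measure on $\mathbb{N}^{\mathbb{Z}}$ such that $\mathbb{E}_\mu(\eta(0))=1$ and such that $\frac{1}{\sqrt{n}}\sum_{x=-n}^{n}(\eta(x)-1)$ converges in distribution, as $n\to\infty$, to a nondegenerate normal random variable. Then $\mu$ is not stabilizable.
   Context: Sandpile model on $\mathbb{Z}$ ($d=1$): a configuration $\eta\in\mathbb{N}^{\mathbb{Z}}$ is stable if $\eta(x)\le 1$ for all $x$; toppling an unstable site $x$ ($\eta(x)\ge 2$) removes 2 grains from $x$ and adds one to each of $x\pm1$. A toppling procedure is a measurable map $T:[0,\infty)\times\mathbb{Z}\times\mathbb{N}^{\mathbb{Z}}\to\mathbb{N}$ ($T(t,x,\eta)$ = number of topplings at $x$ up to time $t$) with $T(0,\cdot,\eta)=0$, $t\mapsto T(t,x,\eta)$ right-continuous, nondecreasing, with jumps of size at most one and finitely many jumps in finite time intervals, and with no infinite chain of topplings at neighboring sites occurring at decreasing times. It is legal if only unstable sites of the current configuration $\eta-\Delta T(t-,\cdot,\eta)$ topple, where $\Delta_{x,y}=2\mathbf{1}_{x=y}-\mathbf{1}_{|x-y|=1}$. A configuration is stabilizable if some legal toppling procedure has $T(\infty,x,\eta)<\infty$ for all $x$ and stable final configuration $\eta-\Delta T(\infty,\cdot,\eta)$; a measure $\mu$ is stabilizable if $\mu$-a.e. configuration is stabilizable. *)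

theory Defs
  imports "HOL-Probability.Probability"
begin

type_synonym config = "int \<Rightarrow> nat"

definition config_space :: "config measure" where
  "config_space = PiM UNIV (\<lambda>_. count_space UNIV)"

text \<open>A toppling procedure: T t x eta = number of topplings at x up to time t.\<close>
type_synonym toppling = "real \<Rightarrow> int \<Rightarrow> config \<Rightarrow> nat"

definition T_left :: "toppling \<Rightarrow> real \<Rightarrow> int \<Rightarrow> config \<Rightarrow> real" where
  "T_left T t x eta = Lim (at_left t) (\<lambda>s. real (T s x eta))"

definition topples_at :: "toppling \<Rightarrow> real \<Rightarrow> int \<Rightarrow> config \<Rightarrow> bool" where
  "topples_at T t x eta \<longleftrightarrow> t > 0 \<and> real (T t x eta) \<noteq> T_left T t x eta"

definition toppling_procedure :: "toppling \<Rightarrow> bool" where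
  "toppling_procedure T \<longleftrightarrow>
     (\<lambda>(t, x, eta). T t x eta) \<in>
        measurable (restrict_space borel {0..} \<Otimes>\<^sub>M count_space UNIV \<Otimes>\<^sub>M config_space)
                   (count_space UNIV)
   \<and> (\<forall>x eta. T 0 x eta = 0)
   \<and> (\<forall>x eta. \<forall>t\<ge>0. ((\<lambda>s. real (T s x eta)) \<longlongrightarrow> real (T t x eta)) (at_right t))
   \<and> (\<forall>x eta. \<forall>s t. 0 \<le> s \<longrightarrow> s \<le> t \<longrightarrow> T s x eta \<le> T t x eta)
   \<and> (\<forall>x eta. \<forall>t>0. ((\<lambda>s. real (T s x eta)) \<longlongrightarrow> T_left T t x eta) (at_left t)
                     \<and> real (T t x eta) - T_left T t x eta \<le> 1)
   \<and> (\<forall>x eta. \<forall>t\<ge>0. finite {s. 0 \<le> s \<and> s \<le> t \<and> topples_at T s x eta})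
   \<and> (\<forall>eta. \<not> (\<exists>xs ts :: nat \<Rightarrow> _.
          (\<forall>k. \<bar>xs (Suc k) - xs k\<bar> = 1 \<and> ts (Suc k) < ts k \<and> topples_at T (ts k) (xs k) eta)))"

definition current_config :: "toppling \<Rightarrow> real \<Rightarrow> config \<Rightarrow> int \<Rightarrow> real" where
  "current_config T t eta x =
     real (eta x) - 2 * T_left T t x eta + T_left T t (x - 1) eta + T_left T t (x + 1) eta"

definition legal :: "toppling \<Rightarrow> bool" where
  "legal T \<longleftrightarrow> (\<forall>eta t x. topples_at T t x eta \<longrightarrow> current_config T t eta x \<ge> 2)"

definition stabilizable :: "config \<Rightarrow> bool" where
  "stabilizable eta \<longleftrightarrow>
     (\<exists>T. toppling_procedure T \<and> legal T \<and>
       (\<exists>F :: int \<Rightarrow> nat.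
          (\<forall>x. ((\<lambda>t. real (T t x eta)) \<longlongrightarrow> real (F x)) at_top) \<and>
          (\<forall>x. int (eta x) - 2 * int (F x) + int (F (x - 1)) + int (F (x + 1)) \<le> 1)))"

definition stabilizable_measure :: "config measure \<Rightarrow> bool" where
  "stabilizable_measure \<mu> \<longleftrightarrow> (AE eta in \<mu>. stabilizable eta)"

definition translation_invariant :: "config measure \<Rightarrow> bool" where
  "translation_invariant \<mu> \<longleftrightarrow> (\<forall>z::int. distr \<mu> config_space (\<lambda>eta x. eta (x + z)) = \<mu>)"

end

theory Submission
  imports Defs
begin


definition Uset :: "config \<Rightarrow> (int \<Rightarrow> nat) set" where
  "Uset eta = {u. \<forall>x. int (eta x) - 2 * int (u x) + int (u (x - 1)) + int (u (x + 1)) \<le> 1}"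

definition mo :: "config \<Rightarrow> int \<Rightarrow> nat" where
  "mo eta x = (if Uset eta = {} then 0 else Inf ((\<lambda>u. u x) ` Uset eta))"

lemma mo_le: "u \<in> Uset eta \<Longrightarrow> mo eta x \<le> u x"
  unfolding mo_def by (auto simp add: cInf_lower)

lemma mo_in: assumes "Uset eta \<noteq> {}" shows "mo eta \<in> Uset eta"
proof -
  have "int (eta x) - 2 * int (mo eta x) + int (mo eta (x - 1)) + int (mo eta (x + 1)) \<le> 1" for x
  proof -
    have "mo eta x \<in> (\<lambda>u. u x) ` Uset eta"
      unfolding mo_def using assms by (simp, intro Inf_nat_def1) auto
    then obtain u where u: "u \<in> Uset eta" "u x = mo eta x" by auto
    have "mo eta (x-1) \<le> u (x-1)" "mo eta (x+1) \<le> u (x+1)" using mo_le[OF u(1)] by auto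
    moreover have "int (eta x) - 2 * int (u x) + int (u (x - 1)) + int (u (x + 1)) \<le> 1"
      using u(1) unfolding Uset_def by auto
    ultimately show ?thesis using u(2) by linarith
  qed
  then show ?thesis unfolding Uset_def by auto
qed

lemma Uset_shift: "(\<lambda>u. u x) ` Uset (\<lambda>y. eta (y + z)) = (\<lambda>u. u (x + z)) ` Uset eta"
proof (intro set_eqI iffI)
  fix k assume "k \<in> (\<lambda>u. u x) ` Uset (\<lambda>y. eta (y + z))"
  then obtain v where v: "v \<in> Uset (\<lambda>y. eta (y + z))" "k = v x" by auto
  define u where "u = (\<lambda>y. v (y - z))"
  have "u \<in> Uset eta" unfolding Uset_def
  proof (intro CollectI allI)
    fix y
    have "int (eta ((y - z) + z)) - 2 * int (v (y-z)) + int (v (y - z - 1)) + int (v (y - z + 1)) \<le> 1"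
      using v(1) unfolding Uset_def by blast
    then show "int (eta y) - 2 * int (u y) + int (u (y - 1)) + int (u (y + 1)) \<le> 1"
      unfolding u_def by (simp add: algebra_simps)
  qed
  moreover have "k = u (x + z)" using v(2) u_def by simp
  ultimately show "k \<in> (\<lambda>u. u (x + z)) ` Uset eta" by blast
next
  fix k assume "k \<in> (\<lambda>u. u (x + z)) ` Uset eta"
  then obtain u where u: "u \<in> Uset eta" "k = u (x + z)" by auto
  define v where "v = (\<lambda>y. u (y + z))"
  have "v \<in> Uset (\<lambda>y. eta (y + z))" unfolding Uset_def
  proof (intro CollectI allI)
    fix y
    have "int (eta (y + z)) - 2 * int (u (y+z)) + int (u (y + z - 1)) + int (u (y + z + 1)) \<le> 1"
      using u(1) unfolding Uset_def by blast
    then show "int (eta (y + z)) - 2 * int (v y) + int (v (y - 1)) + int (v (y + 1)) \<le> 1"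
      unfolding v_def by (simp add: algebra_simps)
  qed
  then show "k \<in> (\<lambda>u. u x) ` Uset (\<lambda>y. eta (y + z))" using u(2) v_def by auto
qed

lemma mo_shift: "mo (\<lambda>y. eta (y + z)) x = mo eta (x + z)"
proof -
  have "Uset (\<lambda>y. eta (y + z)) = {} \<longleftrightarrow> Uset eta = {}"
    using Uset_shift[of x eta z] by (metis image_is_empty)
  then show ?thesis unfolding mo_def Uset_shift by simp
qed

lemma stab_Uset: "stabilizable eta \<Longrightarrow> Uset eta \<noteq> {}"
  unfolding stabilizable_def Uset_def by auto



fun sq :: "(nat \<Rightarrow> int) \<Rightarrow> int \<Rightarrow> int \<Rightarrow> nat \<Rightarrow> int" where
  "sq d p q 0 = p"
| "sq d p q (Suc 0) = q"
| "sq d p q (Suc (Suc n)) = 2 * sq d p q (Suc n) - sq d p q n - d n"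

lemma sq_compare:
  assumes "v 0 = p" "v (Suc 0) = q" "\<And>n. v (Suc (Suc n)) \<le> 2 * v (Suc n) - v n - d n"
  shows "v n \<le> sq d p q n \<and> v (Suc n) - v n \<le> sq d p q (Suc n) - sq d p q n"
proof (induction n)
  case 0 then show ?case using assms by simp
next
  case (Suc n)
  have "v (Suc (Suc n)) - v (Suc n) \<le> sq d p q (Suc (Suc n)) - sq d p q (Suc n)"
    using Suc assms(3)[of n] by simp
  with Suc show ?case by simp
qed

definition cc :: "config \<Rightarrow> int \<Rightarrow> int" where "cc eta y = int (eta y) - 1"

definition gR :: "config \<Rightarrow> int \<Rightarrow> int \<Rightarrow> nat \<Rightarrow> int" where
  "gR eta a b = sq (\<lambda>n. cc eta (int n + 1)) a b"
definition gL :: "config \<Rightarrow> int \<Rightarrow> int \<Rightarrow> nat \<Rightarrow> int" where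
  "gL eta a b = sq (\<lambda>n. cc eta (- int n)) b a"

definition feas :: "config \<Rightarrow> int \<Rightarrow> int \<Rightarrow> bool" where
  "feas eta a b \<longleftrightarrow> (\<forall>n. 0 \<le> gR eta a b n \<and> 0 \<le> gL eta a b n)"

lemma Uset_D: "u \<in> Uset eta \<Longrightarrow> int (u (x - 1)) \<le> 2 * int (u x) - int (u (x + 1)) - cc eta x"
  unfolding Uset_def cc_def by (drule CollectD, drule spec[of _ x], linarith)

lemma feas_if: assumes "u \<in> Uset eta" shows "feas eta (int (u 0)) (int (u 1))"
proof -
  have R: "int (u (int n)) \<le> gR eta (u 0) (u 1) n" for n
  proof -
    have "\<And>n. int (u (int (Suc (Suc n)))) \<le> 2 * int (u (int (Suc n))) - int (u (int n)) - cc eta (int n + 1)"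
    proof -
      fix n
      have "int (u (int n + 1 + 1)) \<le> 2 * int (u (int n + 1)) - int (u (int n + 1 - 1)) - cc eta (int n + 1)"
        using Uset_D[OF assms, of "int n + 1"] by (simp add: algebra_simps)
      then show "int (u (int (Suc (Suc n)))) \<le> 2 * int (u (int (Suc n))) - int (u (int n)) - cc eta (int n + 1)"
        by (simp add: algebra_simps)
    qed
    from sq_compare[of "\<lambda>n. int (u (int n))", OF _ _ this] show ?thesis
      unfolding gR_def by simp
  qed
  have L: "int (u (1 - int n)) \<le> gL eta (u 0) (u 1) n" for n
  proof -
    have "\<And>n. int (u (1 - int (Suc (Suc n)))) \<le> 2 * int (u (1 - int (Suc n))) - int (u (1 - int n)) - cc eta (- int n)"
    proof -
      fix n
      have "int (u (- int n - 1)) \<le> 2 * int (u (- int n)) - int (u (- int n + 1)) - cc eta (- int n)"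
        using Uset_D[OF assms, of "- int n"] by (simp add: algebra_simps)
      moreover have "1 - int (Suc (Suc n)) = - int n - 1" "1 - int (Suc n) = - int n" "1 - int n = - int n + 1" by simp_all
      ultimately show "int (u (1 - int (Suc (Suc n)))) \<le> 2 * int (u (1 - int (Suc n))) - int (u (1 - int n)) - cc eta (- int n)"
        by (simp only:)
    qed
    from sq_compare[of "\<lambda>n. int (u (1 - int n))", OF _ _ this] show ?thesis
      unfolding gL_def by simp
  qed
  show ?thesis unfolding feas_def using R L by (meson of_nat_0_le_iff order_trans)
qed

lemma feas_then: assumes "feas eta (int a) (int b)"
  shows "\<exists>u\<in>Uset eta. u 0 = a \<and> u 1 = b"
proof -
  define w where "w x = (if 0 \<le> x then gR eta a b (nat x) else gL eta a b (nat (1 - x)))" for x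
  have wR: "0 \<le> x \<Longrightarrow> w x = gR eta a b (nat x)" for x by (simp add: w_def)
  have wL: "x \<le> 1 \<Longrightarrow> w x = gL eta a b (nat (1 - x))" for x
  proof -
    assume "x \<le> 1"
    then consider "x < 0" | "x = 0" | "x = 1" by linarith
    then show ?thesis
      by cases (auto simp: w_def gR_def gL_def numeral_2_eq_2)
  qed
  have w0: "0 \<le> w x" for x
    using assms unfolding feas_def w_def by auto
  have rec: "w (x - 1) = 2 * w x - w (x + 1) - cc eta x" for x
  proof (cases "1 \<le> x")
    case True
    define n where "n = nat (x - 1)"
    have x: "x = int n + 1" using True n_def by simp
    have "w (x + 1) = gR eta a b (Suc (Suc n))" "w x = gR eta a b (Suc n)" "w (x - 1) = gR eta a b n"
      using x by (simp_all add: wR nat_add_distrib)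
    then show ?thesis using x by (simp add: gR_def)
  next
    case False
    define n where "n = nat (- x)"
    have x: "x = - int n" using False n_def by simp
    have "w (x - 1) = gL eta a b (Suc (Suc n))" "w x = gL eta a b (Suc n)" "w (x + 1) = gL eta a b n"
      using x False by (simp_all add: wL nat_add_distrib)
    then show ?thesis using x by (simp add: gL_def)
  qed
  define u where "u x = nat (w x)" for x
  have uw: "int (u x) = w x" for x using w0 u_def by simp
  have "u \<in> Uset eta" unfolding Uset_def
    using rec by (auto simp: uw cc_def algebra_simps)
  moreover have "int (u 0) = int a" "int (u 1) = int b" using uw wR[of 0] wR[of 1] by (simp_all add: gR_def)
  then have "u 0 = a" "u 1 = b" by simp_all
  ultimately show ?thesis by blast
qed

lemma mo_le_iff:
  "mo eta 0 \<le> k \<longleftrightarrow> (\<not> (\<exists>a b. feas eta (int a) (int b))) \<or> (\<exists>a b. a \<le> k \<and> feas eta (int a) (int b))"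
proof (cases "Uset eta = {}")
  case True
  then have "mo eta 0 = 0" unfolding mo_def by simp
  moreover have "\<not> (\<exists>a b. feas eta (int a) (int b))" using True feas_then by blast
  ultimately show ?thesis by simp
next
  case False
  then obtain u where u: "u \<in> Uset eta" by auto
  have ex: "\<exists>a b. feas eta (int a) (int b)" using feas_if[OF u] by blast
  show ?thesis
  proof
    assume "mo eta 0 \<le> k"
    then show "(\<not> (\<exists>a b. feas eta (int a) (int b))) \<or> (\<exists>a b. a \<le> k \<and> feas eta (int a) (int b))"
      using feas_if[OF mo_in[OF False]] by blast
  next
    assume "(\<not> (\<exists>a b. feas eta (int a) (int b))) \<or> (\<exists>a b. a \<le> k \<and> feas eta (int a) (int b))"
    then obtain a b where "a \<le> k" "feas eta (int a) (int b)" using ex by blast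
    then obtain v where "v \<in> Uset eta" "v 0 = a" using feas_then by blast
    then show "mo eta 0 \<le> k" using mo_le[of v eta 0] \<open>a \<le> k\<close> by simp
  qed
qed



lemma space_config[simp]: "space config_space = UNIV"
  unfolding config_space_def by (simp add: space_PiM)

lemma meas_coord[measurable]: "(\<lambda>eta. eta y) \<in> measurable config_space (count_space UNIV)"
  unfolding config_space_def by (rule measurable_component_singleton) simp

lemma meas_cc[measurable]: "(\<lambda>eta. real_of_int (cc eta y)) \<in> borel_measurable config_space"
proof -
  have "(\<lambda>eta. real (eta y)) \<in> borel_measurable config_space"
    by (rule measurable_compose[OF meas_coord]) simp
  then show ?thesis unfolding cc_def by simp
qed

lemma meas_sq:
  assumes "\<And>n. (\<lambda>eta. real_of_int (d eta n)) \<in> borel_measurable M"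
  shows "(\<lambda>eta. real_of_int (sq (d eta) p q n)) \<in> borel_measurable M
       \<and> (\<lambda>eta. real_of_int (sq (d eta) p q (Suc n))) \<in> borel_measurable M"
proof (induction n)
  case 0 then show ?case by simp
next
  case (Suc n)
  have "(\<lambda>eta. 2 * real_of_int (sq (d eta) p q (Suc n)) - real_of_int (sq (d eta) p q n) - real_of_int (d eta n)) \<in> borel_measurable M"
    using Suc assms[of n] by (intro borel_measurable_diff borel_measurable_times borel_measurable_const) auto
  then show ?case using Suc by simp
qed

lemma pred_feas[measurable]: "Measurable.pred config_space (\<lambda>eta. feas eta a b)"
proof -
  have R: "(\<lambda>eta. real_of_int (gR eta a b n)) \<in> borel_measurable config_space" for n
    unfolding gR_def by (rule conjunct1[OF meas_sq]) simp
  have L: "(\<lambda>eta. real_of_int (gL eta a b n)) \<in> borel_measurable config_space" for n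
    unfolding gL_def by (rule conjunct1[OF meas_sq]) simp
  have "feas eta a b \<longleftrightarrow> (\<forall>n. 0 \<le> real_of_int (gR eta a b n) \<and> 0 \<le> real_of_int (gL eta a b n))" for eta
    unfolding feas_def by simp
  note [measurable] = R L
  show ?thesis by (simp only: \<open>\<And>eta. feas eta a b \<longleftrightarrow> _\<close>) measurable
qed

lemma meas_mo0: "(\<lambda>eta. mo eta 0) \<in> measurable config_space (count_space UNIV)"
proof -
  have P: "Measurable.pred config_space (\<lambda>eta. mo eta 0 \<le> k)" for k
    unfolding mo_le_iff by measurable
  have "{eta. mo eta 0 = k} \<in> sets config_space" for k
  proof (cases k)
    case 0
    then have "{eta. mo eta 0 = k} = {eta. mo eta 0 \<le> 0}" by auto
    then show ?thesis using predE[OF P[of 0]] by simp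
  next
    case (Suc j)
    then have "{eta. mo eta 0 = k} = {eta. mo eta 0 \<le> k} - {eta. mo eta 0 \<le> j}" by auto
    moreover have "{eta. mo eta 0 \<le> k} \<in> sets config_space" "{eta. mo eta 0 \<le> j} \<in> sets config_space"
      using predE[OF P[of k]] predE[OF P[of j]] by simp_all
    ultimately show ?thesis by simp
  qed
  then show ?thesis
    by (subst measurable_count_space_eq2_countable) (auto simp: vimage_def)
qed

lemma meas_shift[measurable]: "(\<lambda>eta x. eta (x + z)) \<in> measurable config_space config_space"
proof -
  have "(\<lambda>eta x. (\<lambda>x eta. eta (x + z)) x eta) \<in> measurable config_space (Pi\<^sub>M UNIV (\<lambda>_. count_space UNIV))"
    by (rule measurable_PiM_single') (auto simp: meas_coord)
  then show ?thesis unfolding config_space_def[symmetric] by simp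
qed

definition ff :: "config \<Rightarrow> real" where "ff eta = real (mo eta 1) - real (mo eta 0)"

lemma meas_mo1: "(\<lambda>eta. mo eta 1) \<in> measurable config_space (count_space UNIV)"
proof -
  have e: "mo eta 1 = mo (\<lambda>x. eta (x + 1)) 0" for eta
    using mo_shift[of eta 1 0] by (simp only: add_0)
  have eq: "(\<lambda>eta. mo eta 1) = (\<lambda>eta. mo ((\<lambda>eta x. eta (x + 1)) eta) 0)"
    by (rule ext) (rule e)
  have "(\<lambda>eta. mo ((\<lambda>eta x. eta (x + 1)) eta) 0) \<in> measurable config_space (count_space UNIV)"
    by (rule measurable_compose[OF meas_shift[of 1] meas_mo0])
  then show ?thesis by (subst eq)
qed

lemma meas_ff[measurable]: "ff \<in> borel_measurable config_space"
proof -
  have "(\<lambda>eta. real (mo eta 1)) \<in> borel_measurable config_space"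
    by (rule measurable_compose[OF meas_mo1]) simp
  moreover have "(\<lambda>eta. real (mo eta 0)) \<in> borel_measurable config_space"
    by (rule measurable_compose[OF meas_mo0]) simp
  ultimately show ?thesis unfolding ff_def by (rule borel_measurable_diff)
qed



lemma telescope:
  fixes D :: "int \<Rightarrow> real"
  shows "(\<Sum>x\<in>{- int n..int n}. D (x - 1) - D x) = D (- int n - 1) - D (int n)"
proof (induction n)
  case 0 then show ?case by simp
next
  case (Suc n)
  have eq: "{- int (Suc n)..int (Suc n)} = insert (- int n - 1) (insert (int n + 1) {- int n..int n})"
    by auto
  have "(\<Sum>x\<in>{- int (Suc n)..int (Suc n)}. D (x - 1) - D x)
      = (D (- int n - 1 - 1) - D (- int n - 1)) + ((D (int n + 1 - 1) - D (int n + 1)) + (\<Sum>x\<in>{- int n..int n}. D (x - 1) - D x))"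
    unfolding eq by (subst sum.insert; simp)+
  also have "\<dots> = D (- int (Suc n) - 1) - D (int (Suc n))"
    using Suc by (simp add: add.commute)
  finally show ?case .
qed

lemma ff_shift: "ff (\<lambda>x. eta (x + y)) = real (mo eta (y + 1)) - real (mo eta y)"
  unfolding ff_def mo_shift by (simp add: add.commute)

lemma det_ineq:
  assumes "Uset eta \<noteq> {}"
  shows "(\<Sum>x\<in>{- int n..int n}. real (eta x) - 1)
         \<le> ff (\<lambda>x. eta (x + (- int n - 1))) - ff (\<lambda>x. eta (x + int n))"
proof -
  define D where "D y = real (mo eta (y + 1)) - real (mo eta y)" for y
  have "real (eta x) - 1 \<le> D (x - 1) - D x" for x
  proof -
    have "int (eta x) - 2 * int (mo eta x) + int (mo eta (x - 1)) + int (mo eta (x + 1)) \<le> 1"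
      using mo_in[OF assms] unfolding Uset_def by blast
    then have "real (eta x) - 2 * real (mo eta x) + real (mo eta (x - 1)) + real (mo eta (x + 1)) \<le> 1"
      by linarith
    then show ?thesis unfolding D_def by simp
  qed
  then have "(\<Sum>x\<in>{- int n..int n}. real (eta x) - 1) \<le> (\<Sum>x\<in>{- int n..int n}. D (x - 1) - D x)"
    by (rule sum_mono)
  also have "\<dots> = D (- int n - 1) - D (int n)" by (rule telescope)
  also have "\<dots> = ff (\<lambda>x. eta (x + (- int n - 1))) - ff (\<lambda>x. eta (x + int n))"
    unfolding ff_shift D_def ..
  finally show ?thesis .
qed



lemma normal_facts:
  fixes m \<sigma> :: real
  assumes s: "0 < \<sigma>"
  defines "N \<equiv> density lborel (normal_density m \<sigma>)"
  shows "isCont (cdf N) 1" "cdf N 1 < 1"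
proof -
  interpret N: prob_space N unfolding N_def using prob_space_normal_density[OF s] .
  interpret N: real_distribution N
    by unfold_locales (simp add: N_def)
  have f: "(\<lambda>x. ennreal (normal_density m \<sigma> x)) \<in> borel_measurable lborel" by simp
  have "AE x in lborel. x \<notin> {1::real}" by (rule AE_not_in) (simp add: null_sets_def)
  then have "AE x in lborel. x \<in> {1::real} \<longrightarrow> normal_density m \<sigma> x = 0"
    by eventually_elim simp
  then have "{1::real} \<in> null_sets N"
    unfolding N_def null_sets_density_iff[OF f] by simp
  then have "measure N {1} = 0" by (simp add: measure_def null_setsD1)
  then show "isCont (cdf N) 1" using N.isCont_cdf by simp
  have "{1::real<..} \<notin> null_sets N"
  proof
    assume "{1::real<..} \<in> null_sets N"
    then have "AE x in lborel. x \<in> {1::real<..} \<longrightarrow> normal_density m \<sigma> x = 0"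
      unfolding N_def null_sets_density_iff[OF f] by simp
    then have "AE x in lborel. x \<notin> {1::real<..}"
    proof eventually_elim
      case (elim x)
      have "0 < normal_density m \<sigma> x" using s by (rule normal_density_pos)
      then show ?case using elim by auto
    qed
    then have "emeasure lborel {1::real<..} = 0"
      using AE_iff_measurable[of "{1::real<..}" lborel "\<lambda>x. x \<notin> {1::real<..}"] by auto
    moreover have "emeasure lborel {1::real<..<2} \<le> emeasure lborel {1::real<..}"
      by (rule emeasure_mono) auto
    ultimately show False by simp
  qed
  then have pos: "measure N {1<..} > 0"
    by (simp add: N.emeasure_eq_measure null_sets_def zero_less_measure_iff)
  have "measure N {..1} + measure N {1<..} = 1"
  proof -
    have "measure N ({..1} \<union> {1<..}) = measure N {..1} + measure N {1<..}"
      by (rule N.finite_measure_Union) auto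
    moreover have "{..1::real} \<union> {1<..} = space N" by auto
    ultimately show ?thesis using N.prob_space by simp
  qed
  then show "cdf N 1 < 1" using pos by (simp add: cdf_def)
qed



theorem theorem3p5:
  fixes \<mu> :: "config measure"
  assumes "prob_space \<mu>"
    and "sets \<mu> = sets config_space"
    and "translation_invariant \<mu>"
    and "(\<integral>\<^sup>+ eta. ennreal (real (eta 0)) \<partial>\<mu>) = 1"
    and "\<exists>m \<sigma>. \<sigma> > 0 \<and>
           weak_conv_m
             (\<lambda>n. distr \<mu> borel
                (\<lambda>eta. (\<Sum>x\<in>{- int n..int n}. (real (eta x) - 1)) / sqrt (real n)))
             (density lborel (normal_density m \<sigma>))"
  shows "\<not> stabilizable_measure \<mu>"
proof
  assume st: "stabilizable_measure \<mu>"
  obtain m \<sigma> where s: "\<sigma> > 0" and wc: "weak_conv_m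
             (\<lambda>n. distr \<mu> borel
                (\<lambda>eta. (\<Sum>x\<in>{- int n..int n}. (real (eta x) - 1)) / sqrt (real n)))
             (density lborel (normal_density m \<sigma>))"
    using assms(5) by blast
  define N where "N = density lborel (normal_density m \<sigma>)"
  interpret P: prob_space \<mu> by (rule assms(1))
  have sp: "space \<mu> = UNIV" using sets_eq_imp_space_eq[OF assms(2)] by simp
  have mc: "f \<in> borel_measurable \<mu>" if "f \<in> borel_measurable config_space" for f :: "config \<Rightarrow> real"
    using that measurable_cong_sets[OF assms(2) refl, of borel] by blast
  have shiftm: "(\<lambda>eta x. eta (x + z)) \<in> measurable \<mu> config_space" for z
    using meas_shift[of z] measurable_cong_sets[OF assms(2) refl, of config_space] by blast
  have setsm: "{eta. c < g eta} \<in> sets \<mu>" if "g \<in> borel_measurable config_space" for g :: "config \<Rightarrow> real" and c :: real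
    using mc[OF that] unfolding borel_measurable_iff_greater sp by simp
  have setsc: "{eta. c < g eta} \<in> sets config_space" if "g \<in> borel_measurable config_space" for g :: "config \<Rightarrow> real" and c :: real
    using that unfolding borel_measurable_iff_greater by simp
  have inv: "measure \<mu> {eta. c < g (\<lambda>x. eta (x + z))} = measure \<mu> {eta. c < g eta}"
    if g: "g \<in> borel_measurable config_space" for g :: "config \<Rightarrow> real" and c :: real and z
  proof -
    have "measure (distr \<mu> config_space (\<lambda>eta x. eta (x + z))) {eta. c < g eta}
        = measure \<mu> ((\<lambda>eta x. eta (x + z)) -` {eta. c < g eta} \<inter> space \<mu>)"
      by (rule measure_distr[OF shiftm setsc[OF g]])
    moreover have "distr \<mu> config_space (\<lambda>eta x. eta (x + z)) = \<mu>"
      using assms(3) unfolding translation_invariant_def by blast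
    ultimately show ?thesis by (simp add: sp vimage_def)
  qed
  have coord: "(\<lambda>eta. real (eta x)) \<in> borel_measurable config_space" for x
    by (rule measurable_compose[OF meas_coord]) simp
  define Z where "Z n = (\<lambda>eta. (\<Sum>x\<in>{- int n..int n}. (real (eta x) - 1)) / sqrt (real n))" for n
  have Zm: "Z n \<in> borel_measurable config_space" for n
    unfolding Z_def using coord
    by (intro borel_measurable_divide borel_measurable_sum borel_measurable_diff borel_measurable_const) auto
  have nf: "isCont (cdf N) 1" "cdf N 1 < 1" using normal_facts[OF s] unfolding N_def by auto
  define \<delta> where "\<delta> = 1 - cdf N 1"
  have dpos: "\<delta> > 0" using nf(2) \<delta>_def by simp
  have "(\<lambda>n. cdf (distr \<mu> borel (Z n)) 1) \<longlonglongrightarrow> cdf N 1"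
    using wc nf(1) unfolding weak_conv_m_def weak_conv_def N_def Z_def by blast
  moreover have "cdf (distr \<mu> borel (Z n)) 1 = 1 - measure \<mu> {eta. 1 < Z n eta}" for n
  proof -
    have "cdf (distr \<mu> borel (Z n)) 1 = measure \<mu> (Z n -` {..1} \<inter> space \<mu>)"
      unfolding cdf_def by (rule measure_distr[OF mc[OF Zm]]) simp
    also have "\<dots> = measure \<mu> (space \<mu> - {eta. 1 < Z n eta})"
      by (auto simp: sp intro!: arg_cong[where f="measure \<mu>"])
    also have "\<dots> = 1 - measure \<mu> {eta. 1 < Z n eta}"
      by (rule P.prob_compl) (rule setsm[OF Zm])
    finally show ?thesis .
  qed
  ultimately have "(\<lambda>n. 1 - measure \<mu> {eta. 1 < Z n eta}) \<longlonglongrightarrow> 1 - \<delta>"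
    unfolding \<delta>_def by simp
  from tendsto_diff[OF tendsto_const[of 1] this]
  have lim1: "(\<lambda>n. measure \<mu> {eta. 1 < Z n eta}) \<longlonglongrightarrow> \<delta>" by simp
  then obtain n1 where n1: "\<And>n. n \<ge> n1 \<Longrightarrow> \<delta> / 2 < measure \<mu> {eta. 1 < Z n eta}"
    using order_tendstoD(1)[OF lim1, of "\<delta> / 2"] dpos by (auto simp: eventually_sequentially)
  define G where "G eta = \<bar>ff eta\<bar>" for eta
  have Gm: "G \<in> borel_measurable config_space" unfolding G_def by measurable
  have "(\<lambda>i. measure \<mu> {eta. real i < G eta}) \<longlonglongrightarrow> measure \<mu> (\<Inter>i. {eta. real i < G eta})"
    by (rule P.finite_Lim_measure_decseq) (auto simp: setsm[OF Gm] decseq_def)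
  moreover have "(\<Inter>i. {eta. real i < G eta}) = {}"
  proof -
    have False if "\<forall>i. real i < G eta" for eta
    proof -
      obtain k :: nat where "G eta < real k" using reals_Archimedean2 by blast
      with that show False by (meson less_asym)
    qed
    then show ?thesis by auto
  qed
  ultimately have lim2: "(\<lambda>i. measure \<mu> {eta. real i < G eta}) \<longlonglongrightarrow> 0" by simp
  then obtain i0 where i0: "measure \<mu> {eta. real i0 < G eta} < \<delta> / 4"
    using order_tendstoD(2)[OF lim2, of "\<delta> / 4"] dpos by (auto simp: eventually_sequentially)
  have AEU: "AE eta in \<mu>. Uset eta \<noteq> {}"
    using st unfolding stabilizable_measure_def by eventually_elim (rule stab_Uset)
  define n where "n = max n1 (max 1 (4 * i0 * i0))"
  have "n \<ge> n1" "n \<ge> 1" "n \<ge> 4 * i0 * i0" unfolding n_def by auto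
  define c where "c = sqrt (real n) / 2"
  have cpos: "c > 0" unfolding c_def using \<open>n \<ge> 1\<close> by simp
  have "real i0 \<le> c"
  proof -
    have "real (4 * i0 * i0) \<le> real n" using \<open>n \<ge> 4 * i0 * i0\<close> by linarith
    then have "(2 * real i0)^2 \<le> real n" by (simp add: power2_eq_square)
    then have "2 * real i0 \<le> sqrt (real n)" by (rule real_le_rsqrt)
    then show ?thesis unfolding c_def by simp
  qed
  define A where "A = {eta. c < G (\<lambda>x. eta (x + (- int n - 1)))}"
  define B where "B = {eta. c < G (\<lambda>x. eta (x + int n))}"
  have Gsh: "(\<lambda>eta. G (\<lambda>x. eta (x + z))) \<in> borel_measurable config_space" for z
    by (rule measurable_compose[OF meas_shift Gm])
  have "AE eta in \<mu>. eta \<in> {eta. 1 < Z n eta} \<longrightarrow> eta \<in> A \<union> B"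
    using AEU
  proof eventually_elim
    case (elim eta)
    show ?case
    proof
      assume "eta \<in> {eta. 1 < Z n eta}"
      then have "1 < (\<Sum>x\<in>{- int n..int n}. (real (eta x) - 1)) / sqrt (real n)"
        by (simp add: Z_def)
      then have "sqrt (real n) < (\<Sum>x\<in>{- int n..int n}. (real (eta x) - 1))"
        using cpos c_def by (simp add: less_divide_eq)
      with det_ineq[OF elim, of n] have "2 * c < ff (\<lambda>x. eta (x + (- int n - 1))) - ff (\<lambda>x. eta (x + int n))"
        unfolding c_def by simp
      then show "eta \<in> A \<union> B" unfolding A_def B_def G_def by auto
    qed
  qed
  then have "measure \<mu> {eta. 1 < Z n eta} \<le> measure \<mu> (A \<union> B)"
    by (rule P.finite_measure_mono_AE) (auto simp: A_def B_def intro!: setsm[OF Gsh])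
  also have "\<dots> \<le> measure \<mu> A + measure \<mu> B"
    by (rule measure_Un_le) (auto simp: A_def B_def intro!: setsm[OF Gsh])
  also have "\<dots> = 2 * measure \<mu> {eta. c < G eta}"
    unfolding A_def B_def inv[OF Gm] by simp
  also have "\<dots> \<le> 2 * measure \<mu> {eta. real i0 < G eta}"
    using \<open>real i0 \<le> c\<close> by (auto intro!: P.finite_measure_mono setsm[OF Gm])
  also have "\<dots> < \<delta> / 2" using i0 by simp
  finally show False using n1[OF \<open>n \<ge> n1\<close>] by simp
qed

end
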